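(* Let $\mathbf{G}=\int_{\mathbb{R}}[\varphi_k(x):k\in\mathbb{Z}]\,[\varphi_k(x):k\in\mathbb{Z}]^T\,dx$, i.e. $\mathbf{G}(k,m)=\int_{\mathbb{R}}\varphi_k\varphi_m$, and assume that the entries $\mathbf{G}(k,m)$ for $k,m\notin\mathcal{I}_{irr}$ are given. Then $\mathbf{G}$ satisfies the linear system $\mathbf{G}=\frac12\mathbf{P}^T\mathbf{G}\mathbf{P}$, and the remaining entries of $\mathbf{G}$ are uniquely determined by this linear system (together with the given entries). Moreover, $\mathbf{G}_\Phi=\mathbf{D}^{-1/2}\mathbf{G}\mathbf{D}^{-1/2}$ with $\mathbf{D}=\mathrm{diag}(\mathbf{G}\mathbf{1})$, where $\mathbf{1}=[1:k\in\mathbb{Z}]$ and $\mathbf{G}_\Phi=\int_{\mathbb{R}}\Phi(x)\Phi(x)^T\,dx$.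
   Context: Fix $n\in\mathbb{N}$, $h_\ell,h_r>0$, and the mesh $\mathbf{t}(k)=kh_\ell$ for $k<0$, $\mathbf{t}(k)=kh_r$ for $k\ge0$. Let $\mathbf{P}$ be the bi-infinite matrix with $\mathbf{P}(2k,k)=1$; for each $k$, $\mathbf{P}(2k+1,j)$, $j=k-n+1,\dots,k+n$, the unique numbers with $\sum_{j=k-n+1}^{k+n}\mathbf{P}(2k+1,j)\mathbf{t}(j)^\alpha=(\mathbf{t}(2k+1)/2)^\alpha$, $\alpha=0,\dots,2n-1$; all other entries $0$ (semi-regular Dubuc–Deslauriers $2n$-point scheme). This scheme is convergent: for each $k\in\mathbb{Z}$ there is a continuous compactly supported function $\varphi_k$ (basic limit function), the uniform limit of the piecewise linear interpolants of $(2^{-j}\mathbf{t}(m),(\mathbf{P}^j\delta_k)(m))_{m\in\mathbb{Z}}$, $\delta_k$ the unit sequence at $k$. Let $\mathcal{I}_{irr}=\{2-2n,\dots,2n-2\}$. For the last statement assume $\int_{\mathbb{R}}\varphi_k>0$ for all $k$, and let $\Phi=[\phi_k:k\in\mathbb{Z}]$ with $\phi_k=\varphi_k/\sqrt{\int_{\mathbb{R}}\varphi_k}$. *)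

theory Defs
  imports "HOL-Analysis.Analysis"
begin

definition dd_mesh :: "real \<Rightarrow> real \<Rightarrow> int \<Rightarrow> real" where
  "dd_mesh hl hr k = (if k < 0 then real_of_int k * hl else real_of_int k * hr)"

definition dd_P :: "nat \<Rightarrow> real \<Rightarrow> real \<Rightarrow> int \<Rightarrow> int \<Rightarrow> real" where
  "dd_P n hl hr i j =
    (if even i then (if j = i div 2 then 1 else 0)
     else (let k = i div 2;
               c = (THE c :: int \<Rightarrow> real.
                      (\<forall>j. j \<notin> {k - int n + 1 .. k + int n} \<longrightarrow> c j = 0) \<and>
                      (\<forall>\<alpha> < 2 * n. (\<Sum>j\<in>{k - int n + 1 .. k + int n}. c j * dd_mesh hl hr j ^ \<alpha>)
                                   = (dd_mesh hl hr i / 2) ^ \<alpha>))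
           in c j))"

definition dd_subd :: "nat \<Rightarrow> real \<Rightarrow> real \<Rightarrow> (int \<Rightarrow> real) \<Rightarrow> int \<Rightarrow> real" where
  "dd_subd n hl hr c i = (\<Sum>\<^sub>\<infinity> j. dd_P n hl hr i j * c j)"

definition unit_seq :: "int \<Rightarrow> int \<Rightarrow> real" where
  "unit_seq k m = (if m = k then 1 else 0)"

text \<open>Piecewise linear interpolant of the points (X m, Y m), m in Z, for a strictly
  increasing node sequence X unbounded in both directions.\<close>
definition pl_interp :: "(int \<Rightarrow> real) \<Rightarrow> (int \<Rightarrow> real) \<Rightarrow> real \<Rightarrow> real" where
  "pl_interp X Y x =
     (let m = (GREATEST m. X m \<le> x)
      in Y m + (Y (m + 1) - Y m) * (x - X m) / (X (m + 1) - X m))"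

definition I_irr :: "nat \<Rightarrow> int set" where
  "I_irr n = {2 - 2 * int n .. 2 * int n - 2}"

definition is_basic_limit_family :: "nat \<Rightarrow> real \<Rightarrow> real \<Rightarrow> (int \<Rightarrow> real \<Rightarrow> real) \<Rightarrow> bool" where
  "is_basic_limit_family n hl hr \<phi> \<longleftrightarrow>
     (\<forall>k. continuous_on UNIV (\<phi> k) \<and> bounded {x. \<phi> k x \<noteq> 0} \<and>
          uniform_limit UNIV
            (\<lambda>j x. pl_interp (\<lambda>m. dd_mesh hl hr m / 2 ^ j) ((dd_subd n hl hr ^^ j) (unit_seq k)) x)
            (\<phi> k) sequentially)"

definition gram :: "(int \<Rightarrow> real \<Rightarrow> real) \<Rightarrow> int \<Rightarrow> int \<Rightarrow> real" where
  "gram \<phi> k m = (\<integral>x. \<phi> k x * \<phi> m x \<partial>lborel)"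

definition half_PtHP :: "nat \<Rightarrow> real \<Rightarrow> real \<Rightarrow> (int \<Rightarrow> int \<Rightarrow> real) \<Rightarrow> int \<Rightarrow> int \<Rightarrow> real" where
  "half_PtHP n hl hr H k m =
     (1/2) * (\<Sum>\<^sub>\<infinity> i. \<Sum>\<^sub>\<infinity> l. dd_P n hl hr i k * H i l * dd_P n hl hr l m)"

end

theory Submission
  imports Defs "HOL-Computational_Algebra.Polynomial"
begin

lemma moment_poly:
  fixes N :: "'a set" and t :: "'a \<Rightarrow> real" and c :: "'a \<Rightarrow> real"
  assumes fin: "finite N"
    and mom: "\<forall>\<alpha><d. (\<Sum>j\<in>N. c j * t j ^ \<alpha>) = y ^ \<alpha>"
    and deg: "degree p < d"
  shows "(\<Sum>j\<in>N. c j * poly p (t j)) = poly p y"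
proof -
  have "(\<Sum>j\<in>N. c j * poly p (t j)) = (\<Sum>j\<in>N. \<Sum>i\<le>degree p. coeff p i * (c j * t j ^ i))"
    by (simp add: poly_altdef sum_distrib_left algebra_simps)
  also have "\<dots> = (\<Sum>i\<le>degree p. coeff p i * (\<Sum>j\<in>N. c j * t j ^ i))"
    by (subst sum.swap) (simp add: sum_distrib_left)
  also have "\<dots> = (\<Sum>i\<le>degree p. coeff p i * y ^ i)"
    using mom deg by (intro sum.cong) auto
  also have "\<dots> = poly p y" by (simp add: poly_altdef)
  finally show ?thesis .
qed

definition nodep :: "('a \<Rightarrow> real) \<Rightarrow> 'a set \<Rightarrow> 'a \<Rightarrow> real poly" where
  "nodep t N j = (\<Prod>l\<in>N-{j}. [:- t l, 1:])"

lemma poly_nodep: "poly (nodep t N j) x = (\<Prod>l\<in>N-{j}. x - t l)"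
  by (simp add: nodep_def poly_prod)

lemma degree_nodep: "finite N \<Longrightarrow> degree (nodep t N j) \<le> card (N - {j})"
proof -
  assume "finite N"
  have "degree (nodep t N j) \<le> (\<Sum>l\<in>N-{j}. degree [:- t l, 1:])"
    unfolding nodep_def using degree_prod_sum_le[of "N-{j}" "\<lambda>l. [:- t l, 1:]"] \<open>finite N\<close>
    by (simp add: o_def)
  also have "\<dots> = card (N - {j})" by simp
  finally show ?thesis .
qed

lemma nodep_at_other:
  "finite N \<Longrightarrow> i \<in> N \<Longrightarrow> i \<noteq> j \<Longrightarrow> poly (nodep t N j) (t i) = 0"
  unfolding poly_nodep by (rule prod_zero) auto

lemma nodep_at_self:
  "finite N \<Longrightarrow> inj_on t N \<Longrightarrow> j \<in> N \<Longrightarrow> poly (nodep t N j) (t j) \<noteq> 0"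
  unfolding poly_nodep by (auto simp: inj_on_def)

lemma vander_unique:
  fixes N :: "'a set" and t :: "'a \<Rightarrow> real"
  assumes fin: "finite N" and inj: "inj_on t N" and cd: "card N = d"
  shows "\<exists>!c. (\<forall>j. j \<notin> N \<longrightarrow> c j = 0) \<and> (\<forall>\<alpha><d. (\<Sum>j\<in>N. c j * t j ^ \<alpha>) = y ^ \<alpha>)"
proof
  define L where "L j = smult (inverse (poly (nodep t N j) (t j))) (nodep t N j)" for j
  have degL: "degree (L j) < d" if "j \<in> N" for j
  proof -
    have "degree (L j) \<le> card (N - {j})" unfolding L_def
      using degree_nodep[OF fin] by (meson degree_smult_le le_trans)
    also have "\<dots> < d" using that fin cd
      by (metis card_Diff1_less)
    finally show ?thesis .
  qed
  have Lval: "poly (L j) (t i) = (if i = j then 1 else 0)" if "i \<in> N" "j \<in> N" for i j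
  proof (cases "i = j")
    case True
    then show ?thesis using nodep_at_self[OF fin inj, of j] that by (simp add: L_def)
  next
    case False
    then show ?thesis using nodep_at_other[OF fin, of i j t] that by (simp add: L_def)
  qed
  define c where "c j = (if j \<in> N then poly (L j) y else 0)" for j
  show "(\<forall>j. j \<notin> N \<longrightarrow> c j = 0) \<and> (\<forall>\<alpha><d. (\<Sum>j\<in>N. c j * t j ^ \<alpha>) = y ^ \<alpha>)"
  proof (intro conjI allI impI)
    fix j assume "j \<notin> N" thus "c j = 0" by (simp add: c_def)
  next
    fix \<alpha> :: nat assume a: "\<alpha> < d"
    define q where "q = (\<Sum>j\<in>N. smult (t j ^ \<alpha>) (L j))"
    have dq: "degree q < d"
    proof -
      have "degree q \<le> Max (insert 0 ((\<lambda>j. degree (smult (t j ^ \<alpha>) (L j))) ` N))"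
        unfolding q_def by (rule degree_sum_le) (use fin in auto)
      also have "\<dots> < d"
      proof (subst Max_less_iff)
        show "finite (insert 0 ((\<lambda>j. degree (smult (t j ^ \<alpha>) (L j))) ` N))" using fin by simp
        show "\<forall>a\<in>insert 0 ((\<lambda>j. degree (smult (t j ^ \<alpha>) (L j))) ` N). a < d"
          using a degL by auto
      qed simp
      finally show ?thesis .
    qed
    have "q = monom 1 \<alpha>"
    proof (rule poly_eqI_degree[where A="t ` N"])
      fix x assume "x \<in> t ` N"
      then obtain i where i: "i \<in> N" "x = t i" by auto
      have "poly q x = (\<Sum>j\<in>N. t j ^ \<alpha> * (if i = j then 1 else 0))"
        unfolding q_def using i Lval by (simp add: poly_sum)
      also have "\<dots> = (\<Sum>j\<in>N. if i = j then t j ^ \<alpha> else 0)" by (intro sum.cong) auto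
      also have "\<dots> = t i ^ \<alpha>" using i fin by simp
      finally show "poly q x = poly (monom 1 \<alpha>) x" using i by (simp add: poly_monom)
    next
      show "degree q < card (t ` N)" using dq cd card_image[OF inj] by simp
      show "degree (monom (1::real) \<alpha>) < card (t ` N)" using a cd card_image[OF inj]
        by (simp add: degree_monom_eq)
    qed
    hence "poly q y = y ^ \<alpha>" by (simp add: poly_monom)
    moreover have "poly q y = (\<Sum>j\<in>N. c j * t j ^ \<alpha>)"
      unfolding q_def c_def by (auto simp: poly_sum intro: sum.cong)
    ultimately show "(\<Sum>j\<in>N. c j * t j ^ \<alpha>) = y ^ \<alpha>" by simp
  qed
next
  fix c assume c: "(\<forall>j. j \<notin> N \<longrightarrow> c j = 0) \<and> (\<forall>\<alpha><d. (\<Sum>j\<in>N. c j * t j ^ \<alpha>) = y ^ \<alpha>)"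
  define L where "L j = smult (inverse (poly (nodep t N j) (t j))) (nodep t N j)" for j
  have degL: "degree (L j) < d" if "j \<in> N" for j
  proof -
    have "degree (L j) \<le> card (N - {j})" unfolding L_def
      using degree_nodep[OF fin] by (meson degree_smult_le le_trans)
    also have "\<dots> < d" using that fin cd
      by (metis card_Diff1_less)
    finally show ?thesis .
  qed
  have Lval: "poly (L j) (t i) = (if i = j then 1 else 0)" if "i \<in> N" "j \<in> N" for i j
  proof (cases "i = j")
    case True
    then show ?thesis using nodep_at_self[OF fin inj, of j] that by (simp add: L_def)
  next
    case False
    then show ?thesis using nodep_at_other[OF fin, of i j t] that by (simp add: L_def)
  qed
  show "c = (\<lambda>j. if j \<in> N then poly (L j) y else 0)"
  proof
    fix j show "c j = (if j \<in> N then poly (L j) y else 0)"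
    proof (cases "j \<in> N")
      case True
      have "(\<Sum>i\<in>N. c i * poly (L j) (t i)) = poly (L j) y"
        by (rule moment_poly[OF fin _ degL[OF True]]) (use c in auto)
      moreover have "(\<Sum>i\<in>N. c i * poly (L j) (t i)) = (\<Sum>i\<in>N. if i = j then c i else 0)"
        using True Lval by (intro sum.cong) auto
      moreover have "(\<Sum>i\<in>N. if i = j then c i else 0) = c j" using True fin by simp
      ultimately show ?thesis using True by simp
    qed (use c in auto)
  qed
qed

lemma infsum_fin:
  fixes f :: "'a \<Rightarrow> real"
  assumes "finite F" "\<And>x. x \<notin> F \<Longrightarrow> f x = 0"
  shows "infsum f UNIV = sum f F"
proof -
  have "infsum f UNIV = infsum f F" by (rule infsum_cong_neutral) (use assms in auto)
  thus ?thesis using assms by simp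
qed

lemma mesh_less:
  assumes "hl > 0" "hr > 0" "a < b"
  shows "dd_mesh hl hr a < dd_mesh hl hr b"
proof (cases "a < 0")
  case True
  show ?thesis
  proof (cases "b < 0")
    case True
    then show ?thesis using \<open>a < 0\<close> assms by (simp add: dd_mesh_def)
  next
    case False
    have "real_of_int a * hl < 0" using \<open>a < 0\<close> assms by (simp add: mult_neg_pos)
    moreover have "0 \<le> real_of_int b * hr" using False assms by simp
    ultimately show ?thesis using \<open>a < 0\<close> False by (simp add: dd_mesh_def)
  qed
next
  case False
  then show ?thesis using assms by (simp add: dd_mesh_def)
qed

lemma mesh_le_iff:
  assumes "hl > 0" "hr > 0"
  shows "dd_mesh hl hr a \<le> dd_mesh hl hr b \<longleftrightarrow> a \<le> b"
  using mesh_less[OF assms, of a b] mesh_less[OF assms, of b a]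
  by (cases a b rule: linorder_cases) auto

lemma mesh_scale:
  assumes "c > 0"
  shows "dd_mesh hl hr (c * p) = real_of_int c * dd_mesh hl hr p"
  using assms by (auto simp: dd_mesh_def mult_less_0_iff)

locale ddl =
  fixes n :: nat and hl hr :: real
  assumes n1: "n \<ge> 1" and hl: "hl > 0" and hr: "hr > 0"
begin

abbreviation "t \<equiv> dd_mesh hl hr"
abbreviation "P \<equiv> dd_P n hl hr"
abbreviation "V \<equiv> dd_subd n hl hr"

definition R :: "int \<Rightarrow> int set" where "R i = {i div 2 - int n + 1 .. i div 2 + int n}"
definition C :: "int \<Rightarrow> int set" where "C k = {2 * k - 2 * int n .. 2 * k + 2 * int n}"

lemma finite_R[simp]: "finite (R i)" by (simp add: R_def)
lemma finite_C[simp]: "finite (C i)" by (simp add: C_def)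

lemma t_inj: "inj_on t A"
  by (rule inj_onI) (metis mesh_le_iff[OF hl hr] order_antisym order_refl)

lemma P_odd:
  assumes "odd i"
  shows "(\<forall>j. j \<notin> R i \<longrightarrow> P i j = 0) \<and> (\<forall>\<alpha><2*n. (\<Sum>j\<in>R i. P i j * t j ^ \<alpha>) = (t i / 2) ^ \<alpha>)"
proof -
  define k where "k = i div 2"
  let ?N = "{k - int n + 1 .. k + int n}"
  let ?Q = "\<lambda>c :: int \<Rightarrow> real. (\<forall>j. j \<notin> ?N \<longrightarrow> c j = 0) \<and>
                      (\<forall>\<alpha> < 2 * n. (\<Sum>j\<in>?N. c j * t j ^ \<alpha>) = (t i / 2) ^ \<alpha>)"
  have ex: "\<exists>!c. ?Q c"
    by (rule vander_unique) (auto simp: t_inj)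
  have "P i = (THE c. ?Q c)"
    using assms by (auto simp: dd_P_def k_def Let_def fun_eq_iff)
  with theI'[OF ex] have "?Q (P i)" by simp
  thus ?thesis by (simp add: R_def k_def)
qed

lemma P_supp: "j \<notin> R i \<Longrightarrow> P i j = 0"
proof (cases "even i")
  case True
  assume "j \<notin> R i"
  then have "j \<noteq> i div 2" using n1 by (auto simp: R_def)
  then show ?thesis using True by (simp add: dd_P_def)
qed (use P_odd in auto)

lemma P_rowsum: "(\<Sum>j\<in>R i. P i j) = 1"
proof (cases "even i")
  case True
  have "i div 2 \<in> R i" using n1 by (auto simp: R_def)
  have "(\<Sum>j\<in>R i. P i j) = (\<Sum>j\<in>R i. if j = i div 2 then 1 else 0)"
    using True by (intro sum.cong) (auto simp: dd_P_def)
  also have "\<dots> = 1" using \<open>i div 2 \<in> R i\<close> by simp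
  finally show ?thesis .
next
  case False
  have h: "\<forall>\<alpha><2*n. (\<Sum>j\<in>R i. P i j * t j ^ \<alpha>) = (t i / 2) ^ \<alpha>" using P_odd False by blast
  have "0 < 2*n" using n1 by simp
  from h[rule_format, OF this] show ?thesis by simp
qed

lemma P_col: "i \<notin> C k \<Longrightarrow> P i k = 0"
  by (rule P_supp) (auto simp: R_def C_def)

lemma subd_eq: "V c i = (\<Sum>j\<in>R i. P i j * c j)"
  unfolding dd_subd_def by (rule infsum_fin) (auto simp: P_supp)

lemma subd_lin:
  fixes A :: "'b set"
  assumes "finite A"
  shows "V (\<lambda>m. \<Sum>a\<in>A. w a * c a m) = (\<lambda>m. \<Sum>a\<in>A. w a * V (c a) m)"
proof
  fix m
  show "V (\<lambda>m. \<Sum>a\<in>A. w a * c a m) m = (\<Sum>a\<in>A. w a * V (c a) m)"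
    unfolding subd_eq sum_distrib_left
    by (subst sum.swap) (simp add: mult.left_commute)
qed

end

context ddl
begin

definition v :: "nat \<Rightarrow> int \<Rightarrow> int \<Rightarrow> real" where "v j k = (V ^^ j) (unit_seq k)"
definition X :: "nat \<Rightarrow> int \<Rightarrow> real" where "X j m = t m / 2 ^ j"
definition f :: "nat \<Rightarrow> int \<Rightarrow> real \<Rightarrow> real" where "f j k x = pl_interp (X j) (v j k) x"

lemma v_0: "v 0 k = unit_seq k" by (simp add: v_def)
lemma v_Suc: "v (Suc j) k = V (v j k)" by (simp add: v_def)

lemma funpow_lin:
  fixes A :: "'b set"
  assumes "finite A"
  shows "(V ^^ j) (\<lambda>m. \<Sum>a\<in>A. w a * c a m) = (\<lambda>m. \<Sum>a\<in>A. w a * (V ^^ j) (c a) m)"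
proof (induction j)
  case 0 then show ?case by simp
next
  case (Suc j)
  have "(V ^^ Suc j) (\<lambda>m. \<Sum>a\<in>A. w a * c a m) = V ((V ^^ j) (\<lambda>m. \<Sum>a\<in>A. w a * c a m))" by simp
  also have "\<dots> = V (\<lambda>m. \<Sum>a\<in>A. w a * (V ^^ j) (c a) m)" using Suc by simp
  also have "\<dots> = (\<lambda>m. \<Sum>a\<in>A. w a * V ((V ^^ j) (c a)) m)" by (rule subd_lin[OF assms])
  finally show ?case by simp
qed

lemma V_unit: "V (unit_seq k) = (\<lambda>m. \<Sum>i\<in>C k. P i k * unit_seq i m)"
proof
  fix m
  have "V (unit_seq k) m = (\<Sum>j\<in>R m. if j = k then P m j else 0)"
    unfolding subd_eq unit_seq_def by (intro sum.cong) auto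
  also have "\<dots> = P m k" using P_supp[of k m] by auto
  also have "\<dots> = (\<Sum>i\<in>C k. if i = m then P i k else 0)" using P_col[of m k] by auto
  also have "\<dots> = (\<Sum>i\<in>C k. P i k * unit_seq i m)"
    unfolding unit_seq_def by (intro sum.cong) auto
  finally show "V (unit_seq k) m = (\<Sum>i\<in>C k. P i k * unit_seq i m)" .
qed

lemma v_Suc2: "v (Suc j) k m = (\<Sum>i\<in>C k. P i k * v j i m)"
proof -
  have "v (Suc j) k = (V ^^ j) (V (unit_seq k))" by (simp only: v_def funpow_Suc_right comp_def)
  also have "\<dots> = (\<lambda>m. \<Sum>i\<in>C k. P i k * v j i m)"
    unfolding V_unit v_def by (rule funpow_lin) simp
  finally show ?thesis by simp
qed

lemma pl_lin:
  fixes A :: "'b set"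
  assumes "finite A"
  shows "pl_interp Xs (\<lambda>m. \<Sum>a\<in>A. w a * Y a m) x = (\<Sum>a\<in>A. w a * pl_interp Xs (Y a) x)"
proof -
  define m where "m = (GREATEST m. Xs m \<le> x)"
  define r where "r = (x - Xs m) / (Xs (m + 1) - Xs m)"
  have "pl_interp Xs (\<lambda>m. \<Sum>a\<in>A. w a * Y a m) x =
        (\<Sum>a\<in>A. w a * Y a m) + ((\<Sum>a\<in>A. w a * Y a (m+1)) - (\<Sum>a\<in>A. w a * Y a m)) * r"
    by (simp add: pl_interp_def Let_def m_def r_def)
  also have "\<dots> = (\<Sum>a\<in>A. w a * (Y a m + (Y a (m+1) - Y a m) * r))"
    by (simp add: sum_distrib_left sum_distrib_right sum.distrib sum_subtractf algebra_simps)
  also have "\<dots> = (\<Sum>a\<in>A. w a * pl_interp Xs (Y a) x)"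
    by (simp add: pl_interp_def Let_def m_def r_def)
  finally show ?thesis .
qed

lemma pl_scale: "pl_interp (X (Suc j)) Y x = pl_interp (X j) Y (2 * x)"
proof -
  have e: "(\<lambda>m. X (Suc j) m \<le> x) = (\<lambda>m. X j m \<le> 2 * x)"
    by (auto simp: X_def field_simps)
  define m where "m = (GREATEST m. X j m \<le> 2 * x)"
  have "(x - X (Suc j) m) / (X (Suc j) (m + 1) - X (Suc j) m)
      = (2 * x - X j m) / (X j (m + 1) - X j m)"
    by (simp add: X_def divide_simps)
  then show ?thesis unfolding pl_interp_def Let_def e m_def[symmetric] by (metis times_divide_eq_right)
qed

lemma f_Suc: "f (Suc j) k x = (\<Sum>i\<in>C k. P i k * f j i (2 * x))"
  unfolding f_def pl_scale v_Suc2 by (rule pl_lin) simp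

lemma grid: "\<exists>m. t m \<le> y \<and> y < t (m + 1)"
proof (cases "y \<ge> 0")
  case True
  define m where "m = \<lfloor>y / hr\<rfloor>"
  have m0: "m \<ge> 0" using True hr by (simp add: m_def)
  have "real_of_int m \<le> y / hr" "y / hr < real_of_int m + 1" unfolding m_def by linarith+
  hence "real_of_int m * hr \<le> y" "y < (real_of_int m + 1) * hr" using hr by (auto simp: field_simps)
  then show ?thesis using m0 by (intro exI[of _ m]) (simp add: dd_mesh_def)
next
  case False
  define m where "m = \<lfloor>y / hl\<rfloor>"
  have m0: "m < 0" using False hl by (simp add: m_def divide_less_0_iff floor_less_iff)
  have "real_of_int m \<le> y / hl" "y / hl < real_of_int m + 1" unfolding m_def by linarith+
  hence a: "real_of_int m * hl \<le> y" "y < (real_of_int m + 1) * hl" using hl by (auto simp: field_simps)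
  have "y < t (m + 1)"
  proof (cases "m + 1 < 0")
    case True then show ?thesis using a by (simp add: dd_mesh_def)
  next
    case False then have "m + 1 = 0" using m0 by simp
    then show ?thesis using \<open>\<not> y \<ge> 0\<close> by (simp add: dd_mesh_def)
  qed
  then show ?thesis using m0 a by (intro exI[of _ m]) (simp add: dd_mesh_def)
qed

lemma greatest_grid:
  assumes "t m \<le> y" "y < t (m + 1)"
  shows "(GREATEST m. t m \<le> y) = m"
proof (rule Greatest_equality)
  show "t m \<le> y" by fact
  fix m' assume "t m' \<le> y"
  hence "t m' < t (m + 1)" using assms by simp
  hence "m' < m + 1" using mesh_le_iff[OF hl hr, of "m + 1" m'] by linarith
  thus "m' \<le> m" by simp
qed

lemma X_le_iff: "X j m \<le> x \<longleftrightarrow> t m \<le> 2 ^ j * x"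
  by (simp add: X_def field_simps)

lemma pl_at:
  assumes "X j m \<le> x" "x < X j (m + 1)"
  shows "pl_interp (X j) Y x = Y m + (Y (m + 1) - Y m) * (x - X j m) / (X j (m + 1) - X j m)"
proof -
  have "(GREATEST m. X j m \<le> x) = m"
    using greatest_grid[of m "2 ^ j * x"] assms unfolding X_le_iff
    by (simp add: X_def field_simps)
  thus ?thesis by (simp add: pl_interp_def Let_def)
qed

lemma grid_X: "\<exists>m. X j m \<le> x \<and> x < X j (m + 1)"
proof -
  obtain m where "t m \<le> 2 ^ j * x" "2 ^ j * x < t (m + 1)" using grid by blast
  thus ?thesis by (intro exI[of _ m]) (simp add: X_def field_simps)
qed

lemma X_less: "m < m' \<Longrightarrow> X j m < X j m'"
  using mesh_less[OF hl hr] by (simp add: X_def divide_strict_right_mono)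

lemma pl_node: "pl_interp (X j) Y (X j a) = Y a"
  using pl_at[of j a "X j a" Y] X_less[of a "a+1" j] by simp

end

context ddl
begin

definition Bd :: "nat \<Rightarrow> int" where "Bd j = (2 ^ j - 1) * (2 * int n)"

lemma Bd_Suc: "Bd (Suc j) = 2 * Bd j + 2 * int n"
  by (simp add: Bd_def algebra_simps)

lemma div2_bounds: "2 * (m div 2) \<le> m" "m \<le> 2 * (m div 2) + 1" for m :: int
  by presburger+

lemma v_supp: "v j k m \<noteq> 0 \<Longrightarrow> 2 ^ j * k - Bd j \<le> m \<and> m \<le> 2 ^ j * k + Bd j"
proof (induction j arbitrary: m)
  case 0
  then show ?case by (simp add: v_0 unit_seq_def Bd_def split: if_splits)
next
  case (Suc j)
  have "(\<Sum>l\<in>R m. P m l * v j k l) \<noteq> 0" using Suc.prems by (simp add: v_Suc subd_eq)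
  then obtain l where l: "l \<in> R m" "P m l * v j k l \<noteq> 0" by (meson sum.neutral)
  then have "v j k l \<noteq> 0" by simp
  from Suc.IH[OF this] have ih: "2 ^ j * k - Bd j \<le> l" "l \<le> 2 ^ j * k + Bd j" by auto
  have lr: "m div 2 - int n + 1 \<le> l" "l \<le> m div 2 + int n" using l(1) by (auto simp: R_def)
  have e: "(2::int) ^ Suc j * k = 2 * (2 ^ j * k)" by simp
  show ?case unfolding Bd_Suc e using ih lr div2_bounds[of m] by linarith
qed

lemma Bd_le: "Bd j + 1 \<le> 2 ^ j * (2 * int n + 1)"
proof -
  have "(1::int) \<le> 2 ^ j" by simp
  moreover have "Bd j + 1 = 2^j*(2*int n) - 2*int n + 1" by (simp add: Bd_def algebra_simps)
  moreover have "(2::int)^j*(2*int n+1) = 2^j*(2*int n) + 2^j" by (simp add: algebra_simps)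
  ultimately show ?thesis by linarith
qed

lemma X_le: "m \<le> m' \<Longrightarrow> X j m \<le> X j m'"
  using X_less[of m m' j] by (cases "m = m'") auto

lemma X_scale: "X j (2 ^ j * p) = t p"
proof -
  have "t (2 ^ j * p) = real_of_int (2 ^ j) * t p" by (rule mesh_scale) simp
  thus ?thesis by (simp add: X_def)
qed

lemma f_supp:
  assumes "f j k x \<noteq> 0"
  shows "t (k - 2 * int n - 1) \<le> x \<and> x < t (k + 2 * int n + 1)"
proof -
  obtain m where m: "X j m \<le> x" "x < X j (m + 1)" using grid_X by blast
  have "v j k m \<noteq> 0 \<or> v j k (m + 1) \<noteq> 0"
    using assms pl_at[OF m, of "v j k"] by (auto simp: f_def)
  then have b: "2 ^ j * k - Bd j - 1 \<le> m" "m + 1 \<le> 2 ^ j * k + Bd j + 1"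
    using v_supp[of j k m] v_supp[of j k "m+1"] by auto
  have "2 ^ j * (k - 2 * int n - 1) \<le> m" using b(1) Bd_le[of j] by (simp add: algebra_simps)
  from X_le[OF this, of j] have "t (k - 2 * int n - 1) \<le> X j m" by (simp add: X_scale)
  moreover have "m + 1 \<le> 2 ^ j * (k + 2 * int n + 1)" using b(2) Bd_le[of j] by (simp add: algebra_simps)
  from X_le[OF this, of j] have "X j (m + 1) \<le> t (k + 2 * int n + 1)" by (simp add: X_scale)
  ultimately show ?thesis using m by linarith
qed

definition Wd :: "nat \<Rightarrow> int \<Rightarrow> int set" where "Wd j a = {- (\<bar>a\<bar> + Bd j) .. \<bar>a\<bar> + Bd j}"

lemma Bd_nonneg: "Bd j \<ge> 0" by (simp add: Bd_def)

lemma v_supp_W: "v j k a \<noteq> 0 \<Longrightarrow> k \<in> Wd j a"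
proof -
  assume "v j k a \<noteq> 0"
  from v_supp[OF this] have h: "2 ^ j * k - Bd j \<le> a" "a \<le> 2 ^ j * k + Bd j" by auto
  have p: "(1::int) \<le> 2 ^ j" by simp
  show ?thesis
  proof (cases "k \<ge> 0")
    case True
    have "k \<le> 2 ^ j * k" using mult_right_mono[OF p True] by simp
    thus ?thesis using h True Bd_nonneg[of j] abs_ge_self[of a] abs_ge_minus_self[of a]
      unfolding Wd_def atLeastAtMost_iff by linarith
  next
    case False
    have "2 ^ j * k \<le> k" using mult_right_mono_neg[OF p, of k] False by simp
    thus ?thesis using h False Bd_nonneg[of j] abs_ge_self[of a] abs_ge_minus_self[of a]
      unfolding Wd_def atLeastAtMost_iff by linarith
  qed
qed

lemma finite_Wd[simp]: "finite (Wd j a)" by (simp add: Wd_def)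

lemma v_partition:
  "finite W \<Longrightarrow> (\<And>k. v j k a \<noteq> 0 \<Longrightarrow> k \<in> W) \<Longrightarrow> (\<Sum>k\<in>W. v j k a) = 1"
proof (induction j arbitrary: a W)
  case 0
  have "a \<in> W" using 0(2)[of a] by (simp add: v_0 unit_seq_def)
  have "(\<Sum>k\<in>W. v 0 k a) = (\<Sum>k\<in>W. if k = a then 1 else 0)"
    by (intro sum.cong) (auto simp: v_0 unit_seq_def)
  also have "\<dots> = 1" using \<open>a \<in> W\<close> 0(1) by simp
  finally show ?case .
next
  case (Suc j)
  define W2 where "W2 = W \<union> (\<Union>l\<in>R a. Wd j l)"
  have fW2: "finite W2" using Suc.prems(1) by (simp add: W2_def)
  have "(\<Sum>k\<in>W. v (Suc j) k a) = (\<Sum>k\<in>W2. v (Suc j) k a)"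
    by (rule sum.mono_neutral_left) (use fW2 Suc.prems(2) in \<open>auto simp: W2_def\<close>)
  also have "\<dots> = (\<Sum>k\<in>W2. \<Sum>l\<in>R a. P a l * v j k l)"
    by (simp add: v_Suc subd_eq)
  also have "\<dots> = (\<Sum>l\<in>R a. P a l * (\<Sum>k\<in>W2. v j k l))"
    by (subst sum.swap) (simp add: sum_distrib_left)
  also have "\<dots> = (\<Sum>l\<in>R a. P a l)"
  proof (intro sum.cong refl)
    fix l assume "l \<in> R a"
    have "(\<Sum>k\<in>W2. v j k l) = 1"
      by (rule Suc.IH[OF fW2]) (use \<open>l \<in> R a\<close> v_supp_W in \<open>auto simp: W2_def\<close>)
    thus "P a l * (\<Sum>k\<in>W2. v j k l) = P a l" by simp
  qed
  also have "\<dots> = 1" by (rule P_rowsum)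
  finally show ?case .
qed

definition Jx :: "real \<Rightarrow> int set" where
  "Jx x = (let m = (GREATEST m. t m \<le> x) in {m - 2 * int n .. m + 2 * int n + 1})"

lemma Jx_grid: "t m \<le> x \<Longrightarrow> x < t (m + 1) \<Longrightarrow> Jx x = {m - 2 * int n .. m + 2 * int n + 1}"
  by (simp add: Jx_def greatest_grid)

lemma finite_Jx[simp]: "finite (Jx x)" by (simp add: Jx_def Let_def)

lemma supp_in_Jx:
  assumes "t (k - 2 * int n - 1) \<le> x" "x < t (k + 2 * int n + 1)"
  shows "k \<in> Jx x"
proof -
  obtain m where m: "t m \<le> x" "x < t (m + 1)" using grid by blast
  have "k - 2 * int n - 1 < m + 1" using mesh_le_iff[OF hl hr, of "m+1" "k - 2 * int n - 1"] assms m by linarith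
  moreover have "m < k + 2 * int n + 1" using mesh_le_iff[OF hl hr, of "k + 2 * int n + 1" m] assms m by linarith
  ultimately show ?thesis using Jx_grid[OF m] by auto
qed

lemma f_partition: "(\<Sum>k\<in>Jx x. f j k x) = 1"
proof -
  obtain m where m: "X j m \<le> x" "x < X j (m + 1)" using grid_X by blast
  define W where "W = Jx x \<union> Wd j m \<union> Wd j (m + 1)"
  have fW: "finite W" by (simp add: W_def)
  have "(\<Sum>k\<in>Jx x. f j k x) = (\<Sum>k\<in>W. f j k x)"
  proof (rule sum.mono_neutral_left[OF fW])
    show "Jx x \<subseteq> W" by (auto simp: W_def)
    show "\<forall>i\<in>W - Jx x. f j i x = 0" using f_supp supp_in_Jx by blast
  qed
  also have "\<dots> = pl_interp (X j) (\<lambda>a. \<Sum>k\<in>W. 1 * v j k a) x"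
    unfolding f_def by (subst pl_lin[OF fW]) simp
  also have "\<dots> = 1"
  proof -
    have "(\<Sum>k\<in>W. 1 * v j k m) = 1" "(\<Sum>k\<in>W. 1 * v j k (m + 1)) = 1"
      using v_partition[OF fW, of j m] v_partition[OF fW, of j "m+1"] v_supp_W
      by (auto simp: W_def)
    thus ?thesis using pl_at[OF m] by simp
  qed
  finally show ?thesis .
qed

end

lemma integrable_cont_bsupp:
  fixes g :: "real \<Rightarrow> real"
  assumes "continuous_on UNIV g" "bounded {x. g x \<noteq> 0}"
  shows "integrable lborel g"
proof -
  obtain c e where ce: "{x. g x \<noteq> 0} \<subseteq> cball c e" using assms(2) bounded_subset_cball by blast
  have "integrable lborel (\<lambda>x. indicator (cball c e) x *\<^sub>R g x)"
    by (rule borel_integrable_compact) (auto intro: continuous_on_subset[OF assms(1)])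
  moreover have "(\<lambda>x. indicator (cball c e) x *\<^sub>R g x) = g"
    using ce by (auto simp: fun_eq_iff indicator_def)
  ultimately show ?thesis by simp
qed

lemma bounded_cont_bsupp:
  fixes g :: "real \<Rightarrow> real"
  assumes "continuous_on UNIV g" "bounded {x. g x \<noteq> 0}"
  shows "\<exists>B. \<forall>x. \<bar>g x\<bar> \<le> B"
proof -
  obtain c e where ce: "{x. g x \<noteq> 0} \<subseteq> cball c e" using assms(2) bounded_subset_cball by blast
  have "compact (g ` cball c e)"
    by (rule compact_continuous_image) (auto intro: continuous_on_subset[OF assms(1)])
  then obtain B where B: "\<forall>y\<in>g ` cball c e. norm y \<le> B"
    using compact_imp_bounded bounded_iff by metis
  show ?thesis
  proof (intro exI allI)
    fix x show "\<bar>g x\<bar> \<le> max B 0"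
    proof (cases "x \<in> cball c e")
      case True then have "norm (g x) \<le> B" using B by blast
      then show ?thesis by (simp add: le_max_iff_disj)
    next
      case False then have "g x = 0" using ce by auto
      then show ?thesis by simp
    qed
  qed
qed

locale dd = ddl +
  fixes \<phi> :: "int \<Rightarrow> real \<Rightarrow> real"
  assumes blf: "is_basic_limit_family n hl hr \<phi>"
begin

lemma phi_cont: "continuous_on UNIV (\<phi> k)" using blf by (simp add: is_basic_limit_family_def)
lemma phi_bsupp: "bounded {x. \<phi> k x \<noteq> 0}" using blf by (simp add: is_basic_limit_family_def)
lemma phi_unif: "uniform_limit UNIV (\<lambda>j x. f j k x) (\<phi> k) sequentially"
proof -
  have "\<And>j. X j = (\<lambda>m. t m / 2 ^ j)" by (simp add: fun_eq_iff X_def)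
  then have "(\<lambda>j x. f j k x) = (\<lambda>j x. pl_interp (\<lambda>m. dd_mesh hl hr m / 2 ^ j) ((dd_subd n hl hr ^^ j) (unit_seq k)) x)"
    by (simp add: f_def v_def)
  then show ?thesis using blf by (simp add: is_basic_limit_family_def)
qed

lemma phi_lim: "(\<lambda>j. f j k x) \<longlonglongrightarrow> \<phi> k x"
  using tendsto_uniform_limitI[OF phi_unif] by simp

lemma phi_supp:
  assumes "\<phi> k x \<noteq> 0"
  shows "t (k - 2 * int n - 1) \<le> x \<and> x < t (k + 2 * int n + 1)"
proof (rule ccontr)
  assume "\<not> ?thesis"
  then have "\<And>j. f j k x = 0" using f_supp by blast
  then have "(\<lambda>j. f j k x) \<longlonglongrightarrow> 0" by simp
  with phi_lim have "\<phi> k x = 0" using LIMSEQ_unique by blast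
  with assms show False by simp
qed

lemma phi_refine: "\<phi> k x = (\<Sum>i\<in>C k. P i k * \<phi> i (2 * x))"
proof -
  have "(\<lambda>j. f (Suc j) k x) \<longlonglongrightarrow> \<phi> k x" using phi_lim by (rule LIMSEQ_Suc)
  moreover have "(\<lambda>j. f (Suc j) k x) \<longlonglongrightarrow> (\<Sum>i\<in>C k. P i k * \<phi> i (2 * x))"
    unfolding f_Suc by (intro tendsto_sum tendsto_mult_left phi_lim)
  ultimately show ?thesis using LIMSEQ_unique by blast
qed

lemma phi_partition: "(\<Sum>k\<in>Jx x. \<phi> k x) = 1"
proof -
  have "(\<lambda>j. \<Sum>k\<in>Jx x. f j k x) \<longlonglongrightarrow> (\<Sum>k\<in>Jx x. \<phi> k x)"
    by (intro tendsto_sum phi_lim)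
  moreover have "(\<lambda>j. \<Sum>k\<in>Jx x. f j k x) \<longlonglongrightarrow> 1" unfolding f_partition by simp
  ultimately show ?thesis using LIMSEQ_unique by blast
qed

lemma phi_bounded: "\<exists>B. \<forall>x. \<bar>\<phi> k x\<bar> \<le> B"
  by (rule bounded_cont_bsupp[OF phi_cont phi_bsupp])

lemma prod_integrable: "integrable lborel (\<lambda>x. \<phi> k x * \<phi> m x)"
proof (rule integrable_cont_bsupp)
  show "continuous_on UNIV (\<lambda>x. \<phi> k x * \<phi> m x)" by (intro continuous_on_mult phi_cont)
  show "bounded {x. \<phi> k x * \<phi> m x \<noteq> 0}"
    by (rule bounded_subset[OF phi_bsupp[of k]]) auto
qed

lemma overlap:
  assumes "\<phi> k x * \<phi> m x \<noteq> 0"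
  shows "\<bar>k - m\<bar> \<le> 4 * int n + 1"
proof -
  have a: "t (k - 2 * int n - 1) \<le> x \<and> x < t (k + 2 * int n + 1)" using assms phi_supp by auto
  have b: "t (m - 2 * int n - 1) \<le> x \<and> x < t (m + 2 * int n + 1)" using assms phi_supp by auto
  have "k - 2 * int n - 1 < m + 2 * int n + 1"
    using a b mesh_le_iff[OF hl hr, of "m + 2 * int n + 1" "k - 2 * int n - 1"] by linarith
  moreover have "m - 2 * int n - 1 < k + 2 * int n + 1"
    using a b mesh_le_iff[OF hl hr, of "k + 2 * int n + 1" "m - 2 * int n - 1"] by linarith
  ultimately show ?thesis by linarith
qed

lemma half_fin:
  "half_PtHP n hl hr H k m = 1/2 * (\<Sum>i\<in>C k. \<Sum>l\<in>C m. P i k * H i l * P l m)"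
proof -
  have inner: "(\<Sum>\<^sub>\<infinity> l. P i k * H i l * P l m) = (\<Sum>l\<in>C m. P i k * H i l * P l m)" for i
    by (rule infsum_fin) (auto simp: P_col)
  have "(\<Sum>\<^sub>\<infinity> i. \<Sum>l\<in>C m. P i k * H i l * P l m) = (\<Sum>i\<in>C k. \<Sum>l\<in>C m. P i k * H i l * P l m)"
    by (rule infsum_fin) (auto simp: P_col)
  then show ?thesis unfolding half_PtHP_def inner by simp
qed

lemma gram_half: "gram \<phi> k m = (\<integral>x. \<phi> k (2 * x) * \<phi> m (2 * x) \<partial>lborel) * 2"
  using lborel_integral_real_affine[of 2 "\<lambda>y. \<phi> k y * \<phi> m y" 0] by (simp add: gram_def)

lemma gram_eq: "gram \<phi> k m = half_PtHP n hl hr (gram \<phi>) k m"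
proof -
  have int2: "integrable lborel (\<lambda>x. \<phi> i (2 * x) * \<phi> l (2 * x))" for i l
    using lborel_integrable_real_affine[OF prod_integrable[of i l], of 2 0] by simp
  have "gram \<phi> k m = (\<integral>x. (\<Sum>i\<in>C k. \<Sum>l\<in>C m. (P i k * P l m) * (\<phi> i (2 * x) * \<phi> l (2 * x))) \<partial>lborel)"
    unfolding gram_def
  proof (intro Bochner_Integration.integral_cong refl)
    fix x
    have "\<phi> k x * \<phi> m x = (\<Sum>i\<in>C k. P i k * \<phi> i (2 * x)) * (\<Sum>l\<in>C m. P l m * \<phi> l (2 * x))"
      by (simp only: phi_refine[of k x, symmetric] phi_refine[of m x, symmetric])
    also have "\<dots> = (\<Sum>i\<in>C k. \<Sum>l\<in>C m. (P i k * P l m) * (\<phi> i (2 * x) * \<phi> l (2 * x)))"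
      unfolding sum_product by (simp add: mult_ac)
    finally show "\<phi> k x * \<phi> m x = (\<Sum>i\<in>C k. \<Sum>l\<in>C m. (P i k * P l m) * (\<phi> i (2 * x) * \<phi> l (2 * x)))" .
  qed
  also have "\<dots> = (\<Sum>i\<in>C k. \<Sum>l\<in>C m. (P i k * P l m) * (\<integral>x. \<phi> i (2 * x) * \<phi> l (2 * x) \<partial>lborel))"
  proof -
    have "(\<integral>x. (\<Sum>i\<in>C k. \<Sum>l\<in>C m. (P i k * P l m) * (\<phi> i (2 * x) * \<phi> l (2 * x))) \<partial>lborel)
       = (\<Sum>i\<in>C k. (\<integral>x. (\<Sum>l\<in>C m. (P i k * P l m) * (\<phi> i (2 * x) * \<phi> l (2 * x))) \<partial>lborel))"
      by (subst Bochner_Integration.integral_sum) (auto intro!: integrable_sum integrable_mult_right int2)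
    also have "\<dots> = (\<Sum>i\<in>C k. \<Sum>l\<in>C m. (P i k * P l m) * (\<integral>x. \<phi> i (2 * x) * \<phi> l (2 * x) \<partial>lborel))"
    proof (rule sum.cong[OF refl])
      fix i
      show "(\<integral>x. (\<Sum>l\<in>C m. (P i k * P l m) * (\<phi> i (2 * x) * \<phi> l (2 * x))) \<partial>lborel)
         = (\<Sum>l\<in>C m. (P i k * P l m) * (\<integral>x. \<phi> i (2 * x) * \<phi> l (2 * x) \<partial>lborel))"
        by (subst Bochner_Integration.integral_sum) (auto intro!: integrable_mult_right int2)
    qed
    finally show ?thesis .
  qed
  also have "\<dots> = (\<Sum>i\<in>C k. \<Sum>l\<in>C m. (P i k * P l m) * (gram \<phi> i l / 2))"
  proof -
    have h: "(\<integral>x. \<phi> i (2 * x) * \<phi> l (2 * x) \<partial>lborel) = gram \<phi> i l / 2" for i l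
      using gram_half[of i l] by simp
    show ?thesis by (simp only: h)
  qed
  also have "\<dots> = half_PtHP n hl hr (gram \<phi>) k m"
    unfolding half_fin by (simp add: sum_distrib_left mult_ac)
  finally show ?thesis .
qed

end

lemma abs_prod3_le:
  fixes x y z K1 K2 :: real
  assumes "\<bar>x\<bar> \<le> K1" "\<bar>z\<bar> \<le> K2"
  shows "\<bar>x * y * z\<bar> \<le> K1 * \<bar>y\<bar> * K2"
proof -
  have "\<bar>x * y * z\<bar> = \<bar>x\<bar> * \<bar>y\<bar> * \<bar>z\<bar>" by (simp add: abs_mult)
  also have "\<dots> \<le> K1 * \<bar>y\<bar> * \<bar>z\<bar>" using assms(1) by (intro mult_right_mono) auto
  also have "\<dots> \<le> K1 * \<bar>y\<bar> * K2" using assms by (intro mult_left_mono) auto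
  finally show ?thesis .
qed

context dd
begin

lemma v_bound: "\<exists>K. \<forall>\<^sub>F j in sequentially. \<forall>a. \<bar>v j k a\<bar> \<le> K"
proof -
  obtain B where B: "\<And>x. \<bar>\<phi> k x\<bar> \<le> B" using phi_bounded by blast
  have "\<forall>\<^sub>F j in sequentially. \<forall>x\<in>UNIV. dist (f j k x) (\<phi> k x) < 1"
    by (rule uniform_limitD[OF phi_unif]) simp
  then have "\<forall>\<^sub>F j in sequentially. \<forall>a. \<bar>v j k a\<bar> \<le> B + 1"
  proof (rule eventually_mono)
    fix j assume h: "\<forall>x\<in>UNIV. dist (f j k x) (\<phi> k x) < 1"
    show "\<forall>a. \<bar>v j k a\<bar> \<le> B + 1"
    proof
      fix a
      have "v j k a = f j k (X j a)" by (simp add: f_def pl_node)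
      moreover have "dist (f j k (X j a)) (\<phi> k (X j a)) < 1" using h by simp
      moreover have "\<bar>\<phi> k (X j a)\<bar> \<le> B" by (rule B)
      ultimately show "\<bar>v j k a\<bar> \<le> B + 1" by (simp add: dist_real_def)
    qed
  qed
  then show ?thesis by blast
qed

lemma uniq:
  assumes hH: "H = half_PtHP n hl hr H"
    and out: "\<forall>k m. k \<notin> I_irr n \<and> m \<notin> I_irr n \<longrightarrow> H k m = gram \<phi> k m"
    and zer: "\<forall>k m. (\<forall>x. \<phi> k x * \<phi> m x = 0) \<longrightarrow> H k m = 0"
  shows "H = gram \<phi>"
proof -
  define Dm where "Dm k m = H k m - gram \<phi> k m" for k m
  define I' where "I' = {- (6 * int n + 2) .. 6 * int n + 2}"
  define S where "S = I' \<times> I'"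
  have fS: "finite S" by (simp add: S_def I'_def)
  have Drec: "Dm k m = 1/2 * (\<Sum>q\<in>C k \<times> C m. P (fst q) k * P (snd q) m * Dm (fst q) (snd q))" for k m
  proof -
    have "H k m = half_PtHP n hl hr H k m" using hH by metis
    moreover have "gram \<phi> k m = half_PtHP n hl hr (gram \<phi>) k m" by (rule gram_eq)
    ultimately have "Dm k m = 1/2 * (\<Sum>i\<in>C k. \<Sum>l\<in>C m. P i k * H i l * P l m)
        - 1/2 * (\<Sum>i\<in>C k. \<Sum>l\<in>C m. P i k * gram \<phi> i l * P l m)"
      unfolding Dm_def half_fin by simp
    also have "\<dots> = 1/2 * (\<Sum>i\<in>C k. \<Sum>l\<in>C m. P i k * P l m * Dm i l)"
      by (simp add: Dm_def sum_subtractf[symmetric] right_diff_distrib[symmetric] algebra_simps)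
    also have "\<dots> = 1/2 * (\<Sum>q\<in>C k \<times> C m. P (fst q) k * P (snd q) m * Dm (fst q) (snd q))"
      by (simp add: sum.cartesian_product case_prod_beta)
    finally show ?thesis .
  qed
  have Dsupp: "Dm a b = 0" if "(a, b) \<notin> S" for a b
  proof (rule ccontr)
    assume nz: "Dm a b \<noteq> 0"
    have ab: "a \<in> I_irr n \<or> b \<in> I_irr n" using nz out by (auto simp: Dm_def)
    have "\<exists>x. \<phi> a x * \<phi> b x \<noteq> 0"
    proof (rule ccontr)
      assume "\<not> ?thesis"
      then have z: "\<forall>x. \<phi> a x * \<phi> b x = 0" by simp
      then have "H a b = 0" using zer by blast
      moreover have "gram \<phi> a b = 0"
      proof -
        have "(\<lambda>x. \<phi> a x * \<phi> b x) = (\<lambda>x. 0)" using z by auto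
        then show ?thesis by (simp add: gram_def)
      qed
      ultimately show False using nz by (simp add: Dm_def)
    qed
    then obtain x where "\<phi> a x * \<phi> b x \<noteq> 0" by blast
    from overlap[OF this] have "\<bar>a - b\<bar> \<le> 4 * int n + 1" .
    with ab have "(a, b) \<in> S" by (auto simp: S_def I'_def I_irr_def)
    with that show False by simp
  qed
  have iter: "Dm k m = (1/2) ^ j * (\<Sum>p\<in>S. v j k (fst p) * Dm (fst p) (snd p) * v j m (snd p))" for j k m
  proof (induction j arbitrary: k m)
    case 0
    have "(\<Sum>p\<in>S. v 0 k (fst p) * Dm (fst p) (snd p) * v 0 m (snd p))
        = (\<Sum>p\<in>S. if p = (k, m) then Dm k m else 0)"
      by (intro sum.cong refl) (auto simp: v_0 unit_seq_def)
    also have "\<dots> = Dm k m" using fS Dsupp[of k m] by auto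
    finally show ?case by simp
  next
    case (Suc j)
    let ?Q = "C k \<times> C m"
    have fQ: "finite ?Q" by simp
    have "Dm k m = 1/2 * (\<Sum>q\<in>?Q. P (fst q) k * P (snd q) m *
        ((1/2) ^ j * (\<Sum>p\<in>S. v j (fst q) (fst p) * Dm (fst p) (snd p) * v j (snd q) (snd p))))"
      by (subst Drec) (simp only: Suc.IH[symmetric])
    also have "\<dots> = (1/2) ^ Suc j * (\<Sum>q\<in>?Q. \<Sum>p\<in>S. P (fst q) k * P (snd q) m *
         (v j (fst q) (fst p) * Dm (fst p) (snd p) * v j (snd q) (snd p)))"
      by (simp add: sum_distrib_left mult_ac)
    also have "\<dots> = (1/2) ^ Suc j * (\<Sum>p\<in>S. \<Sum>q\<in>?Q. P (fst q) k * P (snd q) m *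
         (v j (fst q) (fst p) * Dm (fst p) (snd p) * v j (snd q) (snd p)))"
      by (subst sum.swap) simp
    also have "\<dots> = (1/2) ^ Suc j * (\<Sum>p\<in>S. v (Suc j) k (fst p) * Dm (fst p) (snd p) * v (Suc j) m (snd p))"
    proof -
      have "(\<Sum>q\<in>?Q. P (fst q) k * P (snd q) m *
         (v j (fst q) (fst p) * Dm (fst p) (snd p) * v j (snd q) (snd p)))
         = v (Suc j) k (fst p) * Dm (fst p) (snd p) * v (Suc j) m (snd p)" for p
      proof -
        have "(\<Sum>q\<in>?Q. P (fst q) k * P (snd q) m *
           (v j (fst q) (fst p) * Dm (fst p) (snd p) * v j (snd q) (snd p)))
           = (\<Sum>i\<in>C k. \<Sum>l\<in>C m. (P i k * v j i (fst p)) * (P l m * v j l (snd p)) * Dm (fst p) (snd p))"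
          by (simp add: sum.cartesian_product case_prod_beta mult_ac)
        also have "\<dots> = (\<Sum>i\<in>C k. P i k * v j i (fst p)) * (\<Sum>l\<in>C m. P l m * v j l (snd p)) * Dm (fst p) (snd p)"
          unfolding sum_product sum_distrib_left sum_distrib_right by (rule sum.swap)
        finally show ?thesis by (simp add: v_Suc2 mult_ac)
      qed
      then show ?thesis by simp
    qed
    finally show ?case .
  qed
  have "Dm k m = 0" for k m
  proof -
    obtain K1 where K1: "\<forall>\<^sub>F j in sequentially. \<forall>a. \<bar>v j k a\<bar> \<le> K1" using v_bound by blast
    obtain K2 where K2: "\<forall>\<^sub>F j in sequentially. \<forall>a. \<bar>v j m a\<bar> \<le> K2" using v_bound by blast
    define c where "c = (\<Sum>p\<in>S. K1 * \<bar>Dm (fst p) (snd p)\<bar> * K2)"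
    have ev: "\<forall>\<^sub>F j in sequentially. \<bar>Dm k m\<bar> \<le> (1/2) ^ j * c"
      using K1 K2
    proof eventually_elim
      case (elim j)
      have "\<bar>Dm k m\<bar> = (1/2) ^ j * \<bar>\<Sum>p\<in>S. v j k (fst p) * Dm (fst p) (snd p) * v j m (snd p)\<bar>"
        by (subst iter[of k m j]) (simp add: abs_mult)
      also have "\<dots> \<le> (1/2) ^ j * c"
      proof (rule mult_left_mono)
        have "\<bar>\<Sum>p\<in>S. v j k (fst p) * Dm (fst p) (snd p) * v j m (snd p)\<bar>
            \<le> (\<Sum>p\<in>S. \<bar>v j k (fst p) * Dm (fst p) (snd p) * v j m (snd p)\<bar>)" by (rule sum_abs)
        also have "\<dots> \<le> c" unfolding c_def
          by (rule sum_mono, rule abs_prod3_le) (use elim in auto)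
        finally show "\<bar>\<Sum>p\<in>S. v j k (fst p) * Dm (fst p) (snd p) * v j m (snd p)\<bar> \<le> c" .
      qed simp
      finally show ?case .
    qed
    have lim: "(\<lambda>j. (1/2::real) ^ j * c) \<longlonglongrightarrow> 0 * c"
      by (intro tendsto_mult_right LIMSEQ_realpow_zero) auto
    have "\<bar>Dm k m\<bar> \<le> 0 * c"
      by (rule tendsto_le[OF trivial_limit_sequentially lim tendsto_const ev])
    then show ?thesis by simp
  qed
  then show ?thesis by (auto simp: fun_eq_iff Dm_def)
qed

lemma phi_integrable: "integrable lborel (\<phi> k)"
  by (rule integrable_cont_bsupp[OF phi_cont phi_bsupp])

lemma gsum: "(\<Sum>\<^sub>\<infinity> j. gram \<phi> k j) = (\<integral>x. \<phi> k x \<partial>lborel)"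
proof -
  define K where "K = {k - (4 * int n + 1) .. k + (4 * int n + 1)}"
  have fK: "finite K" by (simp add: K_def)
  have z: "gram \<phi> k j = 0" if "j \<notin> K" for j
  proof -
    have "\<phi> k x * \<phi> j x = 0" for x
    proof (rule ccontr)
      assume "\<phi> k x * \<phi> j x \<noteq> 0"
      from overlap[OF this] that show False by (auto simp: K_def)
    qed
    then have "(\<lambda>x. \<phi> k x * \<phi> j x) = (\<lambda>x. 0)" by auto
    then show ?thesis by (simp add: gram_def)
  qed
  have "(\<Sum>\<^sub>\<infinity> j. gram \<phi> k j) = (\<Sum>j\<in>K. gram \<phi> k j)" by (rule infsum_fin[OF fK z])
  also have "\<dots> = (\<integral>x. (\<Sum>j\<in>K. \<phi> k x * \<phi> j x) \<partial>lborel)"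
    unfolding gram_def by (subst Bochner_Integration.integral_sum) (auto intro: prod_integrable)
  also have "\<dots> = (\<integral>x. \<phi> k x \<partial>lborel)"
  proof (intro Bochner_Integration.integral_cong refl)
    fix x
    show "(\<Sum>j\<in>K. \<phi> k x * \<phi> j x) = \<phi> k x"
    proof (cases "\<phi> k x = 0")
      case True then show ?thesis by simp
    next
      case False
      have sk: "t (k - 2 * int n - 1) \<le> x" "x < t (k + 2 * int n + 1)" using phi_supp[OF False] by auto
      obtain m0 where m0: "t m0 \<le> x" "x < t (m0 + 1)" using grid by blast
      have "k - 2 * int n - 1 < m0 + 1"
        using mesh_le_iff[OF hl hr, of "m0+1" "k - 2 * int n - 1"] sk m0 by linarith
      moreover have "m0 < k + 2 * int n + 1"
        using mesh_le_iff[OF hl hr, of "k + 2 * int n + 1" m0] sk m0 by linarith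
      ultimately have sub: "Jx x \<subseteq> K" using Jx_grid[OF m0] by (auto simp: K_def)
      have "(\<Sum>j\<in>K. \<phi> j x) = (\<Sum>j\<in>Jx x. \<phi> j x)"
      proof (rule sum.mono_neutral_right[OF fK sub])
        show "\<forall>i\<in>K - Jx x. \<phi> i x = 0" using phi_supp supp_in_Jx by blast
      qed
      also have "\<dots> = 1" by (rule phi_partition)
      finally show ?thesis by (simp add: sum_distrib_left[symmetric])
    qed
  qed
  finally show ?thesis .
qed

end

theorem theorem3:
  fixes n :: nat and hl hr :: real and \<phi> :: "int \<Rightarrow> real \<Rightarrow> real"
  assumes "n \<ge> 1" and "hl > 0" and "hr > 0"
    and "is_basic_limit_family n hl hr \<phi>"
  shows "gram \<phi> = half_PtHP n hl hr (gram \<phi>)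
    \<and> (\<forall>H. H = half_PtHP n hl hr H
           \<and> (\<forall>k m. k \<notin> I_irr n \<and> m \<notin> I_irr n \<longrightarrow> H k m = gram \<phi> k m)
           \<and> (\<forall>k m. (\<forall>x. \<phi> k x * \<phi> m x = 0) \<longrightarrow> H k m = 0)
           \<longrightarrow> H = gram \<phi>)
    \<and> ((\<forall>k. (\<integral>x. \<phi> k x \<partial>lborel) > 0) \<longrightarrow>
        (\<forall>k m. (\<integral>x. (\<phi> k x / sqrt (\<integral>y. \<phi> k y \<partial>lborel))
                      * (\<phi> m x / sqrt (\<integral>y. \<phi> m y \<partial>lborel)) \<partial>lborel)
              = gram \<phi> k m / (sqrt (\<Sum>\<^sub>\<infinity> j. gram \<phi> k j) * sqrt (\<Sum>\<^sub>\<infinity> j. gram \<phi> m j))))"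
proof -
  interpret dd n hl hr \<phi> using assms by unfold_locales
  have c1: "gram \<phi> = half_PtHP n hl hr (gram \<phi>)" by (intro ext) (rule gram_eq)
  have c2: "\<forall>H. H = half_PtHP n hl hr H
           \<and> (\<forall>k m. k \<notin> I_irr n \<and> m \<notin> I_irr n \<longrightarrow> H k m = gram \<phi> k m)
           \<and> (\<forall>k m. (\<forall>x. \<phi> k x * \<phi> m x = 0) \<longrightarrow> H k m = 0)
           \<longrightarrow> H = gram \<phi>" using uniq by blast
  have c3: "\<forall>k m. (\<integral>x. (\<phi> k x / sqrt (\<integral>y. \<phi> k y \<partial>lborel))
                      * (\<phi> m x / sqrt (\<integral>y. \<phi> m y \<partial>lborel)) \<partial>lborel)
              = gram \<phi> k m / (sqrt (\<Sum>\<^sub>\<infinity> j. gram \<phi> k j) * sqrt (\<Sum>\<^sub>\<infinity> j. gram \<phi> m j))"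
  proof (intro allI)
    fix k m
    have e: "(\<lambda>x. (\<phi> k x / sqrt (\<integral>y. \<phi> k y \<partial>lborel)) * (\<phi> m x / sqrt (\<integral>y. \<phi> m y \<partial>lborel)))
      = (\<lambda>x. \<phi> k x * \<phi> m x / (sqrt (\<Sum>\<^sub>\<infinity> j. gram \<phi> k j) * sqrt (\<Sum>\<^sub>\<infinity> j. gram \<phi> m j)))"
      by (simp add: gsum)
    show "(\<integral>x. (\<phi> k x / sqrt (\<integral>y. \<phi> k y \<partial>lborel))
                      * (\<phi> m x / sqrt (\<integral>y. \<phi> m y \<partial>lborel)) \<partial>lborel)
              = gram \<phi> k m / (sqrt (\<Sum>\<^sub>\<infinity> j. gram \<phi> k j) * sqrt (\<Sum>\<^sub>\<infinity> j. gram \<phi> m j))"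
      unfolding e gram_def by (rule integral_divide_zero)
  qed
  show ?thesis using c1 c2 c3 by blast
qed

end
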